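(* For an $L$-layer ADMM-CSNet with Gaussian initialization $\mathbf W_0=(\mathbf W_{10},\mathbf W_{20})$ (i.i.d. $\mathcal N(0,1)$ entries) and any weights $\mathbf W_1,\mathbf W_2$ with $\|\mathbf W_1-\mathbf W_{10}\|\le R_1$, $\|\mathbf W_2-\mathbf W_{20}\|\le R_2$, we have for every $s\in[m]$ $$\|\mathbf b_s^l-\mathbf b^l_{s,0}\|=\tilde O(1/\sqrt m)\quad\forall\,l\in[L-1].$$
   Context: Fix $\lambda>0$ and $\sigma(x)=\log(1+e^{x-\lambda})-\log(1+e^{-x-\lambda})$ (componentwise), $L_\sigma$-Lipschitz and $\beta_\sigma$-smooth. ADMM-CSNet: input $\mathbf y\in\mathbb R^n$ with $|y_i|\le C_y$, initial $\mathbf z^0,\mathbf u^0$ with $|z^0_i|\le C_z$, $|u^0_i|\le C_u$; $\mathbf x^l=\frac1{\sqrt n}W_1^l\mathbf y+\frac1{\sqrt m}W_2^l(\mathbf z^{l-1}-\mathbf u^{l-1})$, $\mathbf z^l=\sigma(\mathbf x^l+\mathbf u^{l-1})$, $\mathbf u^l=\mathbf u^{l-1}+\mathbf x^l-\mathbf z^l$, $W_1^l\in\mathbb R^{m\times n}$, $W_2^l\in\mathbb R^{m\times m}$, output $\mathbf f=\frac1{\sqrt m}\mathbf z^L$, $f_s$ its $s$-th entry. $\mathbf b_s^l=\partial f_s/\partial\mathbf z^l$ at weights $(\mathbf W_1,\mathbf W_2)$ and $\mathbf b^l_{s,0}$ the same at $\mathbf W_0$. Weight distances are Frobenius norms over all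 entries; vector norms are Euclidean. $\tilde O$ is with respect to $m$ (suppressing logarithmic factors), holding with high probability over the initialization. *)

theory Defs
  imports "HOL-Probability.Probability"
begin

definition sigma_act :: "real \<Rightarrow> real \<Rightarrow> real" where
  "sigma_act lam x = ln (1 + exp (x - lam)) - ln (1 + exp (- x - lam))"

(* Vectors of R^k are functions nat => real (only indices < k matter);
   matrices are nat => nat => real; a layer-indexed weight family is nat => nat => nat => real
   (layer l, row i, column j). *)

definition admm_layer ::
  "real \<Rightarrow> nat \<Rightarrow> nat \<Rightarrow> (nat \<Rightarrow> nat \<Rightarrow> real) \<Rightarrow> (nat \<Rightarrow> nat \<Rightarrow> real) \<Rightarrow>
   (nat \<Rightarrow> real) \<Rightarrow> (nat \<Rightarrow> real) \<times> (nat \<Rightarrow> real) \<Rightarrow> (nat \<Rightarrow> real) \<times> (nat \<Rightarrow> real)" where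
  "admm_layer lam n m W1l W2l y zu =
     (let z = fst zu; u = snd zu;
          x = (\<lambda>i. (1 / sqrt (real n)) * (\<Sum>j<n. W1l i j * y j)
                   + (1 / sqrt (real m)) * (\<Sum>j<m. W2l i j * (z j - u j)));
          z' = (\<lambda>i. sigma_act lam (x i + u i));
          u' = (\<lambda>i. u i + x i - z' i)
      in (z', u'))"

(* admm_run ... a k zu applies layers a+1, ..., a+k starting from state zu *)
fun admm_run ::
  "real \<Rightarrow> nat \<Rightarrow> nat \<Rightarrow> (nat \<Rightarrow> nat \<Rightarrow> nat \<Rightarrow> real) \<Rightarrow> (nat \<Rightarrow> nat \<Rightarrow> nat \<Rightarrow> real) \<Rightarrow>
   (nat \<Rightarrow> real) \<Rightarrow> nat \<Rightarrow> nat \<Rightarrow> (nat \<Rightarrow> real) \<times> (nat \<Rightarrow> real) \<Rightarrow> (nat \<Rightarrow> real) \<times> (nat \<Rightarrow> real)" where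
  "admm_run lam n m W1 W2 y a 0 zu = zu"
| "admm_run lam n m W1 W2 y a (Suc k) zu =
     admm_layer lam n m (W1 (a + Suc k)) (W2 (a + Suc k)) y (admm_run lam n m W1 W2 y a k zu)"

definition admm_state where
  "admm_state lam n m W1 W2 y z0 u0 l = admm_run lam n m W1 W2 y 0 l (z0, u0)"

(* b_s^l = d f_s / d z^l, f = z^L / sqrt m, where f_s is viewed as a function of (z^l, u^l)
   through layers l+1..L and differentiated in z^l (u^l held fixed); j-th component *)
definition admm_b ::
  "real \<Rightarrow> nat \<Rightarrow> nat \<Rightarrow> nat \<Rightarrow> (nat \<Rightarrow> nat \<Rightarrow> nat \<Rightarrow> real) \<Rightarrow> (nat \<Rightarrow> nat \<Rightarrow> nat \<Rightarrow> real) \<Rightarrow>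
   (nat \<Rightarrow> real) \<Rightarrow> (nat \<Rightarrow> real) \<Rightarrow> (nat \<Rightarrow> real) \<Rightarrow> nat \<Rightarrow> nat \<Rightarrow> nat \<Rightarrow> real" where
  "admm_b lam n m L W1 W2 y z0 u0 s l j =
     (let zu = admm_state lam n m W1 W2 y z0 u0 l
      in deriv (\<lambda>t. fst (admm_run lam n m W1 W2 y l (L - l) ((fst zu)(j := t), snd zu)) s / sqrt (real m))
               (fst zu j))"

definition vnorm :: "nat \<Rightarrow> (nat \<Rightarrow> real) \<Rightarrow> real" where
  "vnorm k v = sqrt (\<Sum>j<k. (v j)\<^sup>2)"

definition wdist :: "nat \<Rightarrow> nat \<Rightarrow> nat \<Rightarrow> (nat \<Rightarrow> nat \<Rightarrow> nat \<Rightarrow> real) \<Rightarrow> (nat \<Rightarrow> nat \<Rightarrow> nat \<Rightarrow> real) \<Rightarrow> real" where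
  "wdist L nr nc W V = sqrt (\<Sum>l\<in>{1..L}. \<Sum>i<nr. \<Sum>j<nc. (W l i j - V l i j)\<^sup>2)"

(* Index set of the initialization entries: (1,l,i,j) for W_1^l (m x n), (2,l,i,j) for W_2^l (m x m) *)
definition init_index :: "nat \<Rightarrow> nat \<Rightarrow> nat \<Rightarrow> (nat \<times> nat \<times> nat \<times> nat) set" where
  "init_index L n m =
     {(1, l, i, j) | l i j. l \<in> {1..L} \<and> i < m \<and> j < n} \<union>
     {(2, l, i, j) | l i j. l \<in> {1..L} \<and> i < m \<and> j < m}"

definition gauss_init :: "nat \<Rightarrow> nat \<Rightarrow> nat \<Rightarrow> (nat \<times> nat \<times> nat \<times> nat \<Rightarrow> real) measure" where
  "gauss_init L n m = PiM (init_index L n m) (\<lambda>_. density lborel std_normal_density)"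

definition W10_of :: "(nat \<times> nat \<times> nat \<times> nat \<Rightarrow> real) \<Rightarrow> nat \<Rightarrow> nat \<Rightarrow> nat \<Rightarrow> real" where
  "W10_of \<omega> l i j = \<omega> (1, l, i, j)"

definition W20_of :: "(nat \<times> nat \<times> nat \<times> nat \<Rightarrow> real) \<Rightarrow> nat \<Rightarrow> nat \<Rightarrow> nat \<Rightarrow> real" where
  "W20_of \<omega> l i j = \<omega> (2, l, i, j)"

end

theory Submission imports Defs "HOL-Analysis.L2_Norm" begin

definition sigma_d :: "real \<Rightarrow> real \<Rightarrow> real" where
  "sigma_d lam x = exp (x - lam) / (1 + exp (x - lam)) + exp (- x - lam) / (1 + exp (- x - lam))"

lemma sigma_deriv: "(sigma_act lam has_real_derivative sigma_d lam x) (at x)"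
proof -
  have "((\<lambda>x. ln (1 + exp (x - lam)) - ln (1 + exp (- x - lam))) has_real_derivative
        (1 / (1 + exp (x - lam))) * (exp (x - lam) * 1) - (1 / (1 + exp (- x - lam))) * (exp (- x - lam) * (- 1))) (at x)"
    by (rule derivative_eq_intros refl | simp add: add_pos_pos)+
  then show ?thesis unfolding sigma_act_def[abs_def] sigma_d_def by simp
qed

lemma sigma_d_bounds: "0 \<le> sigma_d lam x" "sigma_d lam x \<le> 2"
proof -
  have a: "0 \<le> exp y / (1 + exp y)" "exp y / (1 + exp y) \<le> 1" for y :: real
    by (auto simp: add_pos_pos)
  show "0 \<le> sigma_d lam x" "sigma_d lam x \<le> 2"
    unfolding sigma_d_def using a[of "x - lam"] a[of "-x-lam"] by auto
qed

definition xpre :: "nat \<Rightarrow> nat \<Rightarrow> (nat \<Rightarrow> nat \<Rightarrow> real) \<Rightarrow> (nat \<Rightarrow> nat \<Rightarrow> real) \<Rightarrow>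
   (nat \<Rightarrow> real) \<Rightarrow> (nat \<Rightarrow> real) \<times> (nat \<Rightarrow> real) \<Rightarrow> nat \<Rightarrow> real" where
  "xpre n m W1l W2l y zu i = (1 / sqrt (real n)) * (\<Sum>j<n. W1l i j * y j)
                   + (1 / sqrt (real m)) * (\<Sum>j<m. W2l i j * (fst zu j - snd zu j))"

lemma admm_layer_eq: "admm_layer lam n m W1l W2l y zu =
  ((\<lambda>i. sigma_act lam (xpre n m W1l W2l y zu i + snd zu i)),
   (\<lambda>i. snd zu i + xpre n m W1l W2l y zu i - sigma_act lam (xpre n m W1l W2l y zu i + snd zu i)))"
  by (simp add: admm_layer_def xpre_def Let_def)

definition tan_layer where
  "tan_layer lam n m W1l W2l y zu (d :: (nat \<Rightarrow> real) \<times> (nat \<Rightarrow> real)) =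
    (let dx = (\<lambda>i. (1 / sqrt (real m)) * (\<Sum>j<m. W2l i j * (fst d j - snd d j)));
         dz = (\<lambda>i. sigma_d lam (xpre n m W1l W2l y zu i + snd zu i) * (dx i + snd d i))
     in (dz, (\<lambda>i. snd d i + dx i - dz i)))"

fun tan_run where
  "tan_run lam n m W1 W2 y a 0 zu d = d"
| "tan_run lam n m W1 W2 y a (Suc k) zu d =
     tan_layer lam n m (W1 (a + Suc k)) (W2 (a + Suc k)) y (admm_run lam n m W1 W2 y a k zu)
        (tan_run lam n m W1 W2 y a k zu d)"

lemma layer_deriv:
  assumes "\<And>i. ((\<lambda>t. fst (S t) i) has_real_derivative fst D i) (at t0)"
      and "\<And>i. ((\<lambda>t. snd (S t) i) has_real_derivative snd D i) (at t0)"
  shows "((\<lambda>t. fst (admm_layer lam n m W1l W2l y (S t)) i) has_real_derivative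
            fst (tan_layer lam n m W1l W2l y (S t0) D) i) (at t0)"
    and "((\<lambda>t. snd (admm_layer lam n m W1l W2l y (S t)) i) has_real_derivative
            snd (tan_layer lam n m W1l W2l y (S t0) D) i) (at t0)"
proof -
  define dx where "dx = (\<lambda>i. (1 / sqrt (real m)) * (\<Sum>j<m. W2l i j * (fst D j - snd D j)))"
  have hx: "((\<lambda>t. xpre n m W1l W2l y (S t) i) has_real_derivative dx i) (at t0)" for i
    unfolding xpre_def dx_def
    by (rule derivative_eq_intros refl assms | simp add: mult.commute)+
  have hh: "((\<lambda>t. xpre n m W1l W2l y (S t) i + snd (S t) i) has_real_derivative dx i + snd D i) (at t0)" for i
    by (intro derivative_intros hx assms)
  have hz: "((\<lambda>t. sigma_act lam (xpre n m W1l W2l y (S t) i + snd (S t) i)) has_real_derivative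
     sigma_d lam (xpre n m W1l W2l y (S t0) i + snd (S t0) i) * (dx i + snd D i)) (at t0)" for i
    using DERIV_chain2[OF sigma_deriv hh] by simp
  show "((\<lambda>t. fst (admm_layer lam n m W1l W2l y (S t)) i) has_real_derivative
            fst (tan_layer lam n m W1l W2l y (S t0) D) i) (at t0)"
    unfolding admm_layer_eq tan_layer_def Let_def dx_def[symmetric] using hz by simp
  show "((\<lambda>t. snd (admm_layer lam n m W1l W2l y (S t)) i) has_real_derivative
            snd (tan_layer lam n m W1l W2l y (S t0) D) i) (at t0)"
    unfolding admm_layer_eq tan_layer_def Let_def dx_def[symmetric] snd_conv
    by (intro derivative_intros hz hx assms)
qed

lemma run_deriv:
  assumes "\<And>i. ((\<lambda>t. fst (S t) i) has_real_derivative fst D i) (at t0)"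
      and "\<And>i. ((\<lambda>t. snd (S t) i) has_real_derivative snd D i) (at t0)"
  shows "((\<lambda>t. fst (admm_run lam n m W1 W2 y a k (S t)) i) has_real_derivative
            fst (tan_run lam n m W1 W2 y a k (S t0) D) i) (at t0) \<and>
         ((\<lambda>t. snd (admm_run lam n m W1 W2 y a k (S t)) i) has_real_derivative
            snd (tan_run lam n m W1 W2 y a k (S t0) D) i) (at t0)"
proof (induction k arbitrary: i)
  case 0
  then show ?case using assms by simp
next
  case (Suc k)
  show ?case
    unfolding admm_run.simps tan_run.simps
    by (intro conjI layer_deriv[where S="\<lambda>t. admm_run lam n m W1 W2 y a k (S t)"]) (use Suc in auto)
qed

definition ej :: "nat \<Rightarrow> nat \<Rightarrow> real" where "ej j = (\<lambda>i. if i = j then 1 else 0)"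

lemma admm_b_eq:
  "admm_b lam n m L W1 W2 y z0 u0 s l j =
     fst (tan_run lam n m W1 W2 y l (L - l) (admm_state lam n m W1 W2 y z0 u0 l) (ej j, \<lambda>_. 0)) s / sqrt (real m)"
proof -
  define zu where "zu = admm_state lam n m W1 W2 y z0 u0 l"
  define S where "S = (\<lambda>t. ((fst zu)(j := t), snd zu))"
  have S0: "S (fst zu j) = zu" unfolding S_def by simp
  have d1: "((\<lambda>t. fst (S t) i) has_real_derivative fst (ej j, \<lambda>_::nat. 0::real) i) (at (fst zu j))" for i
    unfolding S_def ej_def by (cases "i = j") (auto intro!: derivative_eq_intros)
  have d2: "((\<lambda>t. snd (S t) i) has_real_derivative snd (ej j, \<lambda>_::nat. 0::real) i) (at (fst zu j))" for i
    unfolding S_def ej_def by (auto intro!: derivative_eq_intros)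
  have "((\<lambda>t. fst (admm_run lam n m W1 W2 y l (L - l) (S t)) s) has_real_derivative
            fst (tan_run lam n m W1 W2 y l (L - l) zu (ej j, \<lambda>_. 0)) s) (at (fst zu j))"
    using run_deriv[OF d1 d2, of lam n m W1 W2 y l "L - l" s] S0 by simp
  then have "((\<lambda>t. fst (admm_run lam n m W1 W2 y l (L - l) (S t)) s / sqrt (real m)) has_real_derivative
            fst (tan_run lam n m W1 W2 y l (L - l) zu (ej j, \<lambda>_. 0)) s / sqrt (real m)) (at (fst zu j))"
    by (rule DERIV_cdivide)
  then show ?thesis
    unfolding admm_b_def Let_def zu_def[symmetric] S_def by (rule DERIV_imp_deriv)
qed

lemma tan_layer_lin:
  assumes "finite J"
  shows "tan_layer lam n m W1l W2l y zu (\<lambda>i. \<Sum>j\<in>J. c j * fst (E j) i, \<lambda>i. \<Sum>j\<in>J. c j * snd (E j) i) =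
    (\<lambda>i. \<Sum>j\<in>J. c j * fst (tan_layer lam n m W1l W2l y zu (E j)) i,
     \<lambda>i. \<Sum>j\<in>J. c j * snd (tan_layer lam n m W1l W2l y zu (E j)) i)"
proof -
  have dx: "(1 / sqrt (real m)) * (\<Sum>j'<m. W2l i j' * ((\<Sum>j\<in>J. c j * fst (E j) j') - (\<Sum>j\<in>J. c j * snd (E j) j')))
     = (\<Sum>j\<in>J. c j * ((1 / sqrt (real m)) * (\<Sum>j'<m. W2l i j' * (fst (E j) j' - snd (E j) j'))))" for i
  proof -
    have "(\<Sum>j'<m. W2l i j' * ((\<Sum>j\<in>J. c j * fst (E j) j') - (\<Sum>j\<in>J. c j * snd (E j) j')))
        = (\<Sum>j'<m. \<Sum>j\<in>J. c j * (W2l i j' * (fst (E j) j' - snd (E j) j')))"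
      by (simp add: sum_subtractf[symmetric] sum_distrib_left algebra_simps)
    also have "\<dots> = (\<Sum>j\<in>J. c j * (\<Sum>j'<m. W2l i j' * (fst (E j) j' - snd (E j) j')))"
      by (subst sum.swap) (simp add: sum_distrib_left)
    finally show ?thesis by (simp add: sum_distrib_left algebra_simps)
  qed
  define dxE where "dxE j i = (1 / sqrt (real m)) * (\<Sum>j'<m. W2l i j' * (fst (E j) j' - snd (E j) j'))" for j i
  define sd where "sd i = sigma_d lam (xpre n m W1l W2l y zu i + snd zu i)" for i
  have e1: "sd i * ((\<Sum>j\<in>J. c j * dxE j i) + (\<Sum>j\<in>J. c j * snd (E j) i)) = (\<Sum>j\<in>J. c j * (sd i * (dxE j i + snd (E j) i)))" for i
    by (simp add: sum_distrib_left sum.distrib[symmetric] algebra_simps)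
  have e2: "(\<Sum>j\<in>J. c j * snd (E j) i) + (\<Sum>j\<in>J. c j * dxE j i) - (\<Sum>j\<in>J. c j * (sd i * (dxE j i + snd (E j) i)))
     = (\<Sum>j\<in>J. c j * (snd (E j) i + dxE j i - sd i * (dxE j i + snd (E j) i)))" for i
    by (simp add: sum.distrib[symmetric] sum_subtractf[symmetric] algebra_simps)
  show ?thesis
    unfolding tan_layer_def Let_def fst_conv snd_conv dx dxE_def[symmetric] sd_def[symmetric]
    using e1 e2 by (simp add: fun_eq_iff)
qed

lemma tan_run_lin:
  assumes "finite J"
  shows "tan_run lam n m W1 W2 y a k zu (\<lambda>i. \<Sum>j\<in>J. c j * fst (E j) i, \<lambda>i. \<Sum>j\<in>J. c j * snd (E j) i) =
    (\<lambda>i. \<Sum>j\<in>J. c j * fst (tan_run lam n m W1 W2 y a k zu (E j)) i,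
     \<lambda>i. \<Sum>j\<in>J. c j * snd (tan_run lam n m W1 W2 y a k zu (E j)) i)"
proof (induction k)
  case 0
  then show ?case by simp
next
  case (Suc k)
  show ?case unfolding tan_run.simps Suc by (rule tan_layer_lin[OF assms])
qed

lemma vnorm_L2: "vnorm k v = L2_set v {..<k}"
  by (simp add: vnorm_def L2_set_def)

lemma L2_abs: "L2_set (\<lambda>i. \<bar>f i\<bar>) A = L2_set f A"
  by (simp add: L2_set_def)

lemma L2_uminus: "L2_set (\<lambda>i. - f i) A = L2_set f A"
  by (simp add: L2_set_def)

lemma L2_diff: "L2_set (\<lambda>i. f i - g i) A \<le> L2_set f A + L2_set g A"
  using L2_set_triangle_ineq[of f "\<lambda>i. - g i" A] by (simp add: L2_uminus)

lemma L2_mono_abs: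
  assumes "\<And>i. i \<in> A \<Longrightarrow> \<bar>f i\<bar> \<le> g i"
  shows "L2_set f A \<le> L2_set g A"
proof -
  have "L2_set (\<lambda>i. \<bar>f i\<bar>) A \<le> L2_set g A"
    by (rule L2_set_mono) (use assms in auto)
  then show ?thesis by (simp add: L2_abs)
qed

definition opb :: "nat \<Rightarrow> (nat \<Rightarrow> nat \<Rightarrow> real) \<Rightarrow> real \<Rightarrow> bool" where
  "opb m W \<beta> \<longleftrightarrow> (\<forall>w. vnorm m (\<lambda>i. \<Sum>j<m. W i j * w j) \<le> \<beta> * vnorm m w)"

definition tnorm :: "nat \<Rightarrow> (nat \<Rightarrow> real) \<times> (nat \<Rightarrow> real) \<Rightarrow> real" where
  "tnorm m d = vnorm m (fst d) + vnorm m (snd d)"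

lemma tan_layer_norm:
  assumes "opb m W2l \<beta>" "0 \<le> \<beta>" "0 < m"
  shows "tnorm m (tan_layer lam n m W1l W2l y zu d) \<le> 5 * (1 + \<beta> / sqrt (real m)) * tnorm m d"
proof -
  define A where "A = {..<m}"
  define dx where "dx = (\<lambda>i. (1 / sqrt (real m)) * (\<Sum>j<m. W2l i j * (fst d j - snd d j)))"
  define dz where "dz = (\<lambda>i. sigma_d lam (xpre n m W1l W2l y zu i + snd zu i) * (dx i + snd d i))"
  have T: "tan_layer lam n m W1l W2l y zu d = (dz, \<lambda>i. snd d i + dx i - dz i)"
    unfolding tan_layer_def Let_def dx_def dz_def by simp
  define B where "B = \<beta> / sqrt (real m)"
  have B0: "0 \<le> B" unfolding B_def using assms by simp
  have "L2_set dx A = (1 / sqrt (real m)) * L2_set (\<lambda>i. \<Sum>j<m. W2l i j * (fst d j - snd d j)) A"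
    unfolding dx_def by (subst L2_set_right_distrib) auto
  also have "\<dots> \<le> (1 / sqrt (real m)) * (\<beta> * L2_set (\<lambda>j. fst d j - snd d j) A)"
    using assms(1) unfolding opb_def vnorm_L2 A_def by (intro mult_left_mono) auto
  also have "\<dots> \<le> (1 / sqrt (real m)) * (\<beta> * (L2_set (fst d) A + L2_set (snd d) A))"
    using assms(2) by (intro mult_left_mono L2_diff) auto
  finally have hdx: "L2_set dx A \<le> B * (L2_set (fst d) A + L2_set (snd d) A)"
    unfolding B_def by simp
  have "L2_set dz A \<le> L2_set (\<lambda>i. 2 * \<bar>dx i + snd d i\<bar>) A"
  proof (rule L2_mono_abs)
    fix i
    have "\<bar>dz i\<bar> = sigma_d lam (xpre n m W1l W2l y zu i + snd zu i) * \<bar>dx i + snd d i\<bar>"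
      unfolding dz_def using sigma_d_bounds(1) by (simp add: abs_mult)
    also have "\<dots> \<le> 2 * \<bar>dx i + snd d i\<bar>"
      using sigma_d_bounds(2) by (intro mult_right_mono) auto
    finally show "\<bar>dz i\<bar> \<le> 2 * \<bar>dx i + snd d i\<bar>" .
  qed
  also have "\<dots> = 2 * L2_set (\<lambda>i. dx i + snd d i) A"
    by (subst L2_set_right_distrib) (auto simp: L2_abs[of "\<lambda>i. 2 * (dx i + snd d i)", simplified abs_mult, simplified])
  also have "\<dots> \<le> 2 * (L2_set dx A + L2_set (snd d) A)"
    by (intro mult_left_mono L2_set_triangle_ineq) auto
  finally have hdz: "L2_set dz A \<le> 2 * (L2_set dx A + L2_set (snd d) A)" .
  have hdu: "L2_set (\<lambda>i. snd d i + dx i - dz i) A \<le> L2_set (snd d) A + L2_set dx A + L2_set dz A"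
    using L2_diff[of "\<lambda>i. snd d i + dx i" dz A] L2_set_triangle_ineq[of "snd d" dx A] by linarith
  have "tnorm m (tan_layer lam n m W1l W2l y zu d) \<le> 5 * (L2_set dx A + L2_set (snd d) A)"
    unfolding T tnorm_def vnorm_L2 A_def[symmetric] fst_conv snd_conv using hdz hdu by (simp add: algebra_simps)
  also have "\<dots> \<le> 5 * (B * (L2_set (fst d) A + L2_set (snd d) A) + (L2_set (fst d) A + L2_set (snd d) A))"
    using hdx L2_set_nonneg[of "fst d" A] by (intro mult_left_mono add_mono) auto
  also have "\<dots> = 5 * (1 + B) * tnorm m d"
    unfolding tnorm_def vnorm_L2 A_def by (simp add: algebra_simps)
  finally show ?thesis unfolding B_def .
qed

lemma tnorm_nonneg: "0 \<le> tnorm m d"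
  unfolding tnorm_def vnorm_L2 by (simp add: L2_set_nonneg add_nonneg_nonneg)

lemma tan_run_norm:
  assumes "\<And>l'. a < l' \<Longrightarrow> l' \<le> a + k \<Longrightarrow> opb m (W2 l') \<beta>" "0 \<le> \<beta>" "0 < m"
  shows "tnorm m (tan_run lam n m W1 W2 y a k zu d) \<le> (5 * (1 + \<beta> / sqrt (real m))) ^ k * tnorm m d"
  using assms(1)
proof (induction k)
  case 0
  then show ?case by simp
next
  case (Suc k)
  have IH: "tnorm m (tan_run lam n m W1 W2 y a k zu d) \<le> (5 * (1 + \<beta> / sqrt (real m))) ^ k * tnorm m d"
    using Suc by auto
  have "tnorm m (tan_run lam n m W1 W2 y a (Suc k) zu d) \<le> 5 * (1 + \<beta> / sqrt (real m)) * tnorm m (tan_run lam n m W1 W2 y a k zu d)"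
    unfolding tan_run.simps by (rule tan_layer_norm) (use Suc.prems assms in auto)
  also have "\<dots> \<le> 5 * (1 + \<beta> / sqrt (real m)) * ((5 * (1 + \<beta> / sqrt (real m))) ^ k * tnorm m d)"
    using IH assms by (intro mult_left_mono) auto
  finally show ?case by (simp add: algebra_simps)
qed

lemma b_norm:
  assumes "\<And>l'. l < l' \<Longrightarrow> l' \<le> L \<Longrightarrow> opb m (W2 l') \<beta>" "0 \<le> \<beta>" "0 < m" "s < m"
  shows "vnorm m (\<lambda>j. admm_b lam n m L W1 W2 y z0 u0 s l j) \<le> (5 * (1 + \<beta> / sqrt (real m))) ^ (L - l) / sqrt (real m)"
proof -
  define b where "b j = admm_b lam n m L W1 W2 y z0 u0 s l j" for j
  define zu where "zu = admm_state lam n m W1 W2 y z0 u0 l"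
  define T where "T d = tan_run lam n m W1 W2 y l (L - l) zu d" for d
  define G where "G = (5 * (1 + \<beta> / sqrt (real m))) ^ (L - l)"
  define E where "E j = (ej j, \<lambda>_::nat. 0::real)" for j
  define A where "A = {..<m}"
  have G0: "0 \<le> G" unfolding G_def using assms by simp
  have sm: "0 < sqrt (real m)" using assms by simp
  have bj: "b j = fst (T (E j)) s / sqrt (real m)" for j
    unfolding b_def admm_b_eq T_def zu_def E_def ..
  define v where "v = (\<lambda>i. \<Sum>j\<in>A. b j * fst (E j) i, \<lambda>i. \<Sum>j\<in>A. b j * snd (E j) i)"
  have Tv: "T v = (\<lambda>i. \<Sum>j\<in>A. b j * fst (T (E j)) i, \<lambda>i. \<Sum>j\<in>A. b j * snd (T (E j)) i)"
    unfolding v_def T_def by (rule tan_run_lin) (simp add: A_def)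
  have "fst (T v) s = (\<Sum>j\<in>A. b j * (sqrt (real m) * b j))"
    unfolding Tv fst_conv using sm by (intro sum.cong) (auto simp: bj)
  also have "\<dots> = sqrt (real m) * (\<Sum>j\<in>A. (b j)\<^sup>2)"
    by (simp add: sum_distrib_left power2_eq_square algebra_simps)
  also have "(\<Sum>j\<in>A. (b j)\<^sup>2) = (L2_set b A)\<^sup>2"
    unfolding L2_set_def by (simp add: sum_nonneg)
  finally have e1: "fst (T v) s = sqrt (real m) * (L2_set b A)\<^sup>2" .
  have "fst (T v) s \<le> L2_set (fst (T v)) A"
    using member_le_L2_set[of A s "fst (T v)"] assms(4) by (simp add: A_def)
  also have "\<dots> \<le> tnorm m (T v)"
    unfolding tnorm_def vnorm_L2 A_def by (simp add: L2_set_nonneg)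
  also have "\<dots> \<le> G * tnorm m v"
    unfolding T_def G_def by (rule tan_run_norm) (use assms in auto)
  also have "tnorm m v = L2_set b A"
  proof -
    have "L2_set (fst v) A = L2_set b A"
    proof (rule L2_set_cong)
      fix i assume i: "i \<in> A"
      have "(\<Sum>j\<in>A. b j * ej j i) = (\<Sum>j\<in>A. if j = i then b j else 0)"
        by (intro sum.cong) (auto simp: ej_def)
      also have "\<dots> = b i" using i by (simp add: A_def)
      finally show "fst v i = b i" unfolding v_def E_def by simp
    qed simp
    moreover have "L2_set (snd v) A = 0"
      unfolding v_def E_def by (simp add: L2_set_def)
    ultimately show ?thesis unfolding tnorm_def vnorm_L2 A_def by simp
  qed
  finally have "sqrt (real m) * (L2_set b A)\<^sup>2 \<le> G * L2_set b A" using e1 by simp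
  then have "L2_set b A \<le> G / sqrt (real m)"
  proof (cases "L2_set b A = 0")
    case True then show ?thesis using G0 sm by simp
  next
    case False
    then have pos: "0 < L2_set b A" using L2_set_nonneg[of b A] by linarith
    assume h: "sqrt (real m) * (L2_set b A)\<^sup>2 \<le> G * L2_set b A"
    then have "sqrt (real m) * L2_set b A \<le> G"
      using pos by (simp add: power2_eq_square algebra_simps)
    then show ?thesis using sm by (simp add: field_simps)
  qed
  then show ?thesis unfolding vnorm_L2 G_def A_def b_def .
qed

definition ip :: "nat \<Rightarrow> (nat \<Rightarrow> real) \<Rightarrow> (nat \<Rightarrow> real) \<Rightarrow> real" where
  "ip m a b = (\<Sum>i<m. a i * b i)"

definition Mv :: "nat \<Rightarrow> (nat \<Rightarrow> nat \<Rightarrow> real) \<Rightarrow> (nat \<Rightarrow> real) \<Rightarrow> nat \<Rightarrow> real" where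
  "Mv m M x = (\<lambda>i. \<Sum>j<m. M i j * x j)"

lemma vnorm_nonneg: "0 \<le> vnorm m v"
  by (simp add: vnorm_L2)

lemma ip_cs: "\<bar>ip m a b\<bar> \<le> vnorm m a * vnorm m b"
proof -
  have "\<bar>ip m a b\<bar> \<le> (\<Sum>i<m. \<bar>a i\<bar> * \<bar>b i\<bar>)"
    unfolding ip_def by (rule order.trans[OF sum_abs]) (simp add: abs_mult)
  also have "\<dots> \<le> vnorm m a * vnorm m b"
    unfolding vnorm_L2 by (rule L2_set_mult_ineq)
  finally show ?thesis .
qed

lemma vnorm_sq: "(vnorm m v)\<^sup>2 = (\<Sum>i<m. (v i)\<^sup>2)"
  unfolding vnorm_def by (simp add: sum_nonneg)

lemma ip_self: "ip m v v = (vnorm m v)\<^sup>2"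
  unfolding vnorm_sq ip_def by (simp add: power2_eq_square)

lemma frob_bound:
  "vnorm m (Mv m M x) \<le> sqrt (\<Sum>i<m. \<Sum>j<m. (M i j)\<^sup>2) * vnorm m x"
proof -
  have row: "(\<Sum>j<m. M i j * x j)\<^sup>2 \<le> (\<Sum>j<m. (M i j)\<^sup>2) * (vnorm m x)\<^sup>2" for i
  proof -
    have "\<bar>\<Sum>j<m. M i j * x j\<bar> \<le> vnorm m (M i) * vnorm m x"
      using ip_cs[of m "M i" x] unfolding ip_def .
    then have "(\<Sum>j<m. M i j * x j)\<^sup>2 \<le> (vnorm m (M i) * vnorm m x)\<^sup>2"
      by (metis abs_ge_zero power2_abs power_mono)
    then show ?thesis by (simp add: power_mult_distrib vnorm_sq)
  qed
  have "(vnorm m (Mv m M x))\<^sup>2 = (\<Sum>i<m. (\<Sum>j<m. M i j * x j)\<^sup>2)"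
    by (simp add: vnorm_sq Mv_def)
  also have "\<dots> \<le> (\<Sum>i<m. (\<Sum>j<m. (M i j)\<^sup>2) * (vnorm m x)\<^sup>2)"
    by (intro sum_mono row)
  also have "\<dots> = (sqrt (\<Sum>i<m. \<Sum>j<m. (M i j)\<^sup>2) * vnorm m x)\<^sup>2"
    by (simp add: power_mult_distrib sum_distrib_right sum_nonneg)
  finally show ?thesis
    by (rule power2_le_imp_le) (simp add: vnorm_nonneg sum_nonneg)
qed

lemma Mv_add: "Mv m M (\<lambda>j. a j + b j) = (\<lambda>i. Mv m M a i + Mv m M b i)"
  by (simp add: Mv_def fun_eq_iff distrib_left sum.distrib)

lemma Mv_scale: "Mv m M (\<lambda>j. c * a j) = (\<lambda>i. c * Mv m M a i)"
  by (simp add: Mv_def fun_eq_iff sum_distrib_left mult.left_commute)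

lemma vnorm_scale: "vnorm m (\<lambda>i. c * a i) = \<bar>c\<bar> * vnorm m a"
  unfolding vnorm_def by (simp add: power_mult_distrib sum_distrib_left[symmetric] real_sqrt_mult)

lemma vnorm_add: "vnorm m (\<lambda>i. a i + b i) \<le> vnorm m a + vnorm m b"
  unfolding vnorm_L2 by (rule L2_set_triangle_ineq)

lemma vnorm_diff: "vnorm m (\<lambda>i. a i - b i) \<le> vnorm m a + vnorm m b"
  unfolding vnorm_L2 by (rule L2_diff)

lemma opb_perturb:
  assumes "opb m W0 \<beta>" "(\<Sum>i<m. \<Sum>j<m. (W i j - W0 i j)\<^sup>2) \<le> R\<^sup>2" "0 \<le> R"
  shows "opb m W (\<beta> + R)"
  unfolding opb_def
proof
  fix w
  have eq: "(\<lambda>i. \<Sum>j<m. W i j * w j) = (\<lambda>i. Mv m W0 w i + Mv m (\<lambda>i j. W i j - W0 i j) w i)"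
    by (simp add: Mv_def fun_eq_iff sum_subtractf left_diff_distrib)
  have "vnorm m (\<lambda>i. \<Sum>j<m. W i j * w j) \<le> vnorm m (Mv m W0 w) + vnorm m (Mv m (\<lambda>i j. W i j - W0 i j) w)"
    unfolding eq by (rule vnorm_add)
  also have "\<dots> \<le> \<beta> * vnorm m w + R * vnorm m w"
  proof (rule add_mono)
    show "vnorm m (Mv m W0 w) \<le> \<beta> * vnorm m w" using assms(1) by (simp add: opb_def Mv_def)
    have "sqrt (\<Sum>i<m. \<Sum>j<m. (W i j - W0 i j)\<^sup>2) \<le> sqrt (R\<^sup>2)"
      by (rule real_sqrt_le_mono[OF assms(2)])
    also have "\<dots> = R" using assms(3) by simp
    finally have "sqrt (\<Sum>i<m. \<Sum>j<m. (W i j - W0 i j)\<^sup>2) \<le> R" .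
    then show "vnorm m (Mv m (\<lambda>i j. W i j - W0 i j) w) \<le> R * vnorm m w"
      using frob_bound[of m "\<lambda>i j. W i j - W0 i j" w] vnorm_nonneg[of m w]
      by (meson mult_right_mono order_trans)
  qed
  finally show "vnorm m (\<lambda>i. \<Sum>j<m. W i j * w j) \<le> (\<beta> + R) * vnorm m w" by (simp add: algebra_simps)
qed

definition net :: "nat \<Rightarrow> (nat \<Rightarrow> real) set" where
  "net m = {p. (\<forall>j. m \<le> j \<longrightarrow> p j = 0) \<and>
     (\<forall>j<m. \<exists>a::int. - int (4 * m) \<le> a \<and> a \<le> int (4 * m) \<and> p j = of_int a / real (4 * m)) \<and>
     vnorm m p \<le> 2}"

lemma net_card: "finite (net m) \<and> card (net m) \<le> (8 * m + 1) ^ m"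
proof -
  define D where "D = 4 * m"
  define f where "f a = (\<lambda>j. if j < m then of_int (a j) / real D else 0)" for a :: "nat \<Rightarrow> int"
  define P where "P = PiE {..<m} (\<lambda>_. {- int D..int D})"
  have sub: "net m \<subseteq> f ` P"
  proof
    fix p assume p: "p \<in> net m"
    define a where "a = restrict (\<lambda>j. \<lfloor>p j * real D\<rfloor>) {..<m}"
    have aj: "j < m \<Longrightarrow> - int D \<le> a j \<and> a j \<le> int D \<and> of_int (a j) / real D = p j" for j
    proof -
      assume j: "j < m"
      then obtain b :: int where b: "- int D \<le> b" "b \<le> int D" "p j = of_int b / real D"
        using p unfolding net_def D_def by auto
      have D0: "real D > 0" using j unfolding D_def by simp
      have "p j * real D = of_int b" using b(3) D0 by simp
      then have "a j = b" unfolding a_def using j by simp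
      then show ?thesis using b by simp
    qed
    have "a \<in> P" unfolding P_def using aj by (auto simp: a_def PiE_iff)
    moreover have "p = f a"
    proof
      fix j show "p j = f a j"
        using aj[of j] p unfolding f_def net_def by (cases "j < m") auto
    qed
    ultimately show "p \<in> f ` P" by blast
  qed
  have finP: "finite P" unfolding P_def by (intro finite_PiE) auto
  have "card P = (8 * m + 1) ^ m"
    unfolding P_def by (simp add: card_PiE D_def) (simp add: nat_add_distrib nat_mult_distrib)
  then have "card (f ` P) \<le> (8 * m + 1) ^ m" using card_image_le[OF finP, of f] by simp
  then show ?thesis using sub finP by (meson card_mono finite_imageI finite_subset order_trans)
qed

lemma abs_le_vnorm: "j < m \<Longrightarrow> \<bar>x j\<bar> \<le> vnorm m x"
  using member_le_L2_set[of "{..<m}" j "\<lambda>i. \<bar>x i\<bar>"] by (simp add: L2_abs vnorm_L2)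

lemma net_round:
  assumes "0 < m" "vnorm m x \<le> 1"
  shows "\<exists>p\<in>net m. vnorm m (\<lambda>j. x j - p j) \<le> 1/4"
proof -
  define D where "D = 4 * m"
  have D0: "real D > 0" using assms unfolding D_def by simp
  define p where "p j = (if j < m then of_int \<lfloor>real D * x j\<rfloor> / real D else 0)" for j
  have err: "\<bar>x j - p j\<bar> \<le> 1 / real D" if j: "j < m" for j
  proof -
    have "0 \<le> real D * x j - of_int \<lfloor>real D * x j\<rfloor>" "real D * x j - of_int \<lfloor>real D * x j\<rfloor> < 1"
      by linarith+
    then have "\<bar>real D * x j - of_int \<lfloor>real D * x j\<rfloor>\<bar> \<le> 1" by simp
    moreover have "real D * x j - of_int \<lfloor>real D * x j\<rfloor> = real D * (x j - p j)"
      using j D0 by (simp add: p_def algebra_simps)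
    ultimately have "real D * \<bar>x j - p j\<bar> \<le> 1" by (simp add: abs_mult)
    then show ?thesis using D0 by (simp add: field_simps)
  qed
  have "vnorm m (\<lambda>j. x j - p j) \<le> L2_set (\<lambda>_. 1 / real D) {..<m}"
    unfolding vnorm_L2 by (rule L2_mono_abs) (use err in auto)
  also have "\<dots> = sqrt (real m) / real D" by (simp add: L2_set_constant)
  also have "\<dots> \<le> 1/4"
  proof -
    have "sqrt (real m) \<le> real m"
      using assms(1) by (metis of_nat_0_le_iff real_sqrt_le_iff sqrt_le_D of_nat_le_iff less_eq_Suc_le
        One_nat_def le_square mult.commute of_nat_mult power2_eq_square real_sqrt_abs abs_of_nat real_sqrt_le_mono)
    then show ?thesis using D0 unfolding D_def by (simp add: field_simps)
  qed
  finally have e: "vnorm m (\<lambda>j. x j - p j) \<le> 1/4" .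
  have "p \<in> net m"
  proof -
    have rng: "- int D \<le> \<lfloor>real D * x j\<rfloor> \<and> \<lfloor>real D * x j\<rfloor> \<le> int D" if "j < m" for j
    proof -
      have "\<bar>x j\<bar> \<le> 1" using abs_le_vnorm[OF that, of x] assms(2) by simp
      then have "real D * (-1) \<le> real D * x j" "real D * x j \<le> real D * 1"
        using D0 by (intro mult_left_mono; auto)+
      then show ?thesis by linarith
    qed
    have "vnorm m p = vnorm m (\<lambda>j. x j - (x j - p j))" by simp
    also have "\<dots> \<le> vnorm m x + vnorm m (\<lambda>j. x j - p j)" by (rule vnorm_diff)
    finally have "vnorm m p \<le> 2" using e assms(2) by simp
    then show ?thesis unfolding net_def using rng by (auto simp: p_def D_def)
  qed
  then show ?thesis using e by blast
qed

lemma ip_split: "ip m y v = ip m q v + ip m (\<lambda>i. y i - q i) v"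
  by (simp add: ip_def left_diff_distrib sum_subtractf)

lemma ip_split2: "ip m q (\<lambda>i. a i + b i) = ip m q a + ip m q b"
  by (simp add: ip_def distrib_left sum.distrib)

lemma net_vnorm: "p \<in> net m \<Longrightarrow> vnorm m p \<le> 2"
  by (simp add: net_def)

lemma net_opb:
  assumes "0 < m" "0 \<le> t" "\<forall>p\<in>net m. \<forall>q\<in>net m. \<bar>ip m q (Mv m M p)\<bar> \<le> t"
  shows "opb m M (4 * t)"
proof -
  define F where "F = sqrt (\<Sum>i<m. \<Sum>j<m. (M i j)\<^sup>2)"
  define U where "U = (\<lambda>x. vnorm m (Mv m M x)) ` {x. vnorm m x \<le> 1}"
  define S where "S = Sup U"
  have F0: "0 \<le> F" unfolding F_def by (simp add: sum_nonneg)
  have bdd: "bdd_above U"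
  proof (rule bdd_aboveI)
    fix u assume "u \<in> U"
    then obtain x where "vnorm m x \<le> 1" "u = vnorm m (Mv m M x)" unfolding U_def by auto
    then show "u \<le> F" using frob_bound[of m M x] F0 unfolding F_def[symmetric]
      by (meson mult_left_le order_trans vnorm_nonneg)
  qed
  have ne: "U \<noteq> {}" unfolding U_def using vnorm_nonneg[of m "\<lambda>_. 0"]
    by (auto intro!: exI[of _ "\<lambda>_. 0"] simp: vnorm_def)
  have up: "vnorm m (Mv m M x) \<le> S" if "vnorm m x \<le> 1" for x
    unfolding S_def by (rule cSup_upper[OF _ bdd]) (use that in \<open>auto simp: U_def\<close>)
  have S0: "0 \<le> S"
  proof -
    have "vnorm m (\<lambda>_::nat. 0::real) \<le> 1" by (simp add: vnorm_def)
    then have "vnorm m (Mv m M (\<lambda>_. 0)) \<le> S" by (rule up)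
    then show ?thesis using vnorm_nonneg[of m "Mv m M (\<lambda>_. 0)"] by linarith
  qed
  have key: "vnorm m (Mv m M x) \<le> t + 3/4 * S" if x: "vnorm m x \<le> 1" for x
  proof (cases "vnorm m (Mv m M x) = 0")
    case True then show ?thesis using assms(2) S0 by simp
  next
    case False
    define v where "v = Mv m M x"
    define nv where "nv = vnorm m v"
    have nv0: "0 < nv" using False vnorm_nonneg[of m v] unfolding nv_def v_def by linarith
    define y where "y = (\<lambda>i. (1 / nv) * v i)"
    have ny: "vnorm m y = 1" unfolding y_def vnorm_scale nv_def[symmetric] using nv0 by simp
    obtain q where q: "q \<in> net m" "vnorm m (\<lambda>i. y i - q i) \<le> 1/4"
      using net_round[OF assms(1), of y] ny by auto
    obtain p where p: "p \<in> net m" "vnorm m (\<lambda>i. x i - p i) \<le> 1/4"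
      using net_round[OF assms(1) x] by auto
    have "ip m y v = (1 / nv) * (nv)\<^sup>2"
      unfolding y_def ip_def nv_def vnorm_sq by (simp add: sum_distrib_left power2_eq_square mult.assoc)
    then have e1: "nv = ip m y v" using nv0 by (simp add: power2_eq_square)
    have vS: "nv \<le> S" unfolding nv_def v_def by (rule up[OF x])
    have h1: "ip m (\<lambda>i. y i - q i) v \<le> 1/4 * S"
    proof -
      have "ip m (\<lambda>i. y i - q i) v \<le> vnorm m (\<lambda>i. y i - q i) * nv"
        using ip_cs[of m "\<lambda>i. y i - q i" v] unfolding nv_def by simp
      also have "\<dots> \<le> 1/4 * S"
        using q(2) vS nv0 vnorm_nonneg[of m "\<lambda>i. y i - q i"] by (intro mult_mono) auto
      finally show ?thesis .
    qed
    have vsplit: "v = (\<lambda>i. Mv m M p i + Mv m M (\<lambda>j. x j - p j) i)"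
      unfolding v_def Mv_add[symmetric] by simp
    have h2: "ip m q (Mv m M p) \<le> t" using assms(3) p(1) q(1) by fastforce
    have h3: "ip m q (Mv m M (\<lambda>j. x j - p j)) \<le> 2 * (1/4 * S)"
    proof -
      have "vnorm m (\<lambda>j. 4 * (x j - p j)) \<le> 1"
        using p(2) unfolding vnorm_scale[of m 4 "\<lambda>j. x j - p j"] by simp
      then have "vnorm m (Mv m M (\<lambda>j. 4 * (x j - p j))) \<le> S" by (rule up)
      then have m4: "vnorm m (Mv m M (\<lambda>j. x j - p j)) \<le> 1/4 * S"
        unfolding Mv_scale[of m M 4 "\<lambda>j. x j - p j"] vnorm_scale[of m 4] by simp
      have "ip m q (Mv m M (\<lambda>j. x j - p j)) \<le> vnorm m q * vnorm m (Mv m M (\<lambda>j. x j - p j))"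
        using ip_cs[of m q "Mv m M (\<lambda>j. x j - p j)"] by simp
      also have "\<dots> \<le> 2 * (1/4 * S)"
        using net_vnorm[OF q(1)] m4 vnorm_nonneg S0 by (intro mult_mono) auto
      finally show ?thesis .
    qed
    have "nv = ip m q (Mv m M p) + ip m q (Mv m M (\<lambda>j. x j - p j)) + ip m (\<lambda>i. y i - q i) v"
    proof -
      have "ip m q v = ip m q (Mv m M p) + ip m q (Mv m M (\<lambda>j. x j - p j))"
        by (subst vsplit) (rule ip_split2)
      then show ?thesis unfolding e1 ip_split[of m y v q] by simp
    qed
    then have "nv \<le> t + 3/4 * S" using h1 h2 h3 by linarith
    then show ?thesis unfolding nv_def v_def .
  qed
  have "S \<le> t + 3/4 * S"
    unfolding S_def using ne by (rule cSup_least) (use key in \<open>auto simp: U_def S_def\<close>)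
  then have S4: "S \<le> 4 * t" by linarith
  show ?thesis unfolding opb_def
  proof
    fix w
    show "vnorm m (\<lambda>i. \<Sum>j<m. M i j * w j) \<le> 4 * t * vnorm m w"
    proof (cases "vnorm m w = 0")
      case True
      then show ?thesis using frob_bound[of m M w] vnorm_nonneg[of m "Mv m M w"] by (simp add: Mv_def)
    next
      case False
      define nw where "nw = vnorm m w"
      have nw0: "0 < nw" using False vnorm_nonneg[of m w] unfolding nw_def by linarith
      define x where "x = (\<lambda>j. (1 / nw) * w j)"
      have "vnorm m x = 1" unfolding x_def vnorm_scale nw_def[symmetric] using nw0 by simp
      then have "vnorm m (Mv m M x) \<le> S" using up by simp
      then have "vnorm m (Mv m M x) \<le> 4 * t" using S4 by linarith
      moreover have "Mv m M w = (\<lambda>i. nw * Mv m M x i)"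
        unfolding x_def Mv_scale[symmetric] using nw0 by simp
      ultimately have "vnorm m (Mv m M w) \<le> nw * (4 * t)"
        using nw0 by (simp add: vnorm_scale)
      then show ?thesis unfolding Mv_def nw_def by (simp add: algebra_simps)
    qed
  qed
qed



lemma (in prob_space) gauss_tail:
  assumes fin: "finite J" and ind: "indep_vars (\<lambda>_. borel) X J"
    and dist: "\<And>i. i \<in> J \<Longrightarrow> distributed M lborel (X i) std_normal_density"
    and t: "0 < t"
  shows "measure M {\<omega>\<in>space M. t \<le> \<bar>\<Sum>i\<in>J. c i * X i \<omega>\<bar>}
          \<le> (\<Sum>i\<in>J. (c i)\<^sup>2) ^ k * (fact (2 * k) / (2 ^ k * fact k)) / t ^ (2 * k)"
proof -
  define J' where "J' = {i\<in>J. c i \<noteq> 0}"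
  have finJ': "finite J'" using fin unfolding J'_def by simp
  have sumeq: "(\<Sum>i\<in>J. c i * X i \<omega>) = (\<Sum>i\<in>J'. c i * X i \<omega>)" for \<omega>
    unfolding J'_def using fin by (intro sum.mono_neutral_right) auto
  have sumeq2: "(\<Sum>i\<in>J. (c i)\<^sup>2) = (\<Sum>i\<in>J'. (c i)\<^sup>2)"
    unfolding J'_def using fin by (intro sum.mono_neutral_right) auto
  have rhs0: "0 \<le> (\<Sum>i\<in>J. (c i)\<^sup>2) ^ k * (fact (2 * k) / (2 ^ k * fact k)) / t ^ (2 * k)"
    using t by (simp add: sum_nonneg)
  show ?thesis
  proof (cases "J' = {}")
    case True
    then have "{\<omega>\<in>space M. t \<le> \<bar>\<Sum>i\<in>J. c i * X i \<omega>\<bar>} = {}" using t by (simp add: sumeq)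
    then have "measure M {\<omega>\<in>space M. t \<le> \<bar>\<Sum>i\<in>J. c i * X i \<omega>\<bar>} = 0" by (simp only: measure_empty)
    then show ?thesis using rhs0 by linarith
  next
    case False
    define \<sigma> where "\<sigma> = sqrt (\<Sum>i\<in>J'. (\<bar>c i\<bar>)\<^sup>2)"
    have \<sigma>pos: "0 < \<sigma>" unfolding \<sigma>_def using False finJ'
      by (intro real_sqrt_gt_zero sum_pos) (auto simp: J'_def)
    have \<sigma>sq: "\<sigma>\<^sup>2 = (\<Sum>i\<in>J. (c i)\<^sup>2)" unfolding \<sigma>_def sumeq2 by (simp add: sum_nonneg)
    define Y where "Y i \<omega> = c i * X i \<omega>" for i \<omega>
    have indY: "indep_vars (\<lambda>_. borel) Y J'"
      unfolding Y_def
      by (rule indep_vars_compose2[where X=X and Y="\<lambda>i x. c i * x"]) (auto intro: indep_vars_subset[OF ind] simp: J'_def)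
    have distY: "distributed M lborel (Y i) (normal_density 0 \<bar>c i\<bar>)" if "i \<in> J'" for i
    proof -
      have "distributed M lborel (\<lambda>x. 0 + c i * X i x) (normal_density (0 + c i * 0) (\<bar>c i\<bar> * 1))"
        by (rule normal_density_affine) (use that dist in \<open>auto simp: J'_def\<close>)
      then show ?thesis unfolding Y_def by simp
    qed
    have distZ: "distributed M lborel (\<lambda>\<omega>. \<Sum>i\<in>J'. Y i \<omega>) (normal_density (\<Sum>i\<in>J'. 0) \<sigma>)"
      unfolding \<sigma>_def
      by (rule sum_indep_normal[OF finJ' False indY]) (use distY in \<open>auto simp: J'_def\<close>)
    define Z where "Z \<omega> = (\<Sum>i\<in>J'. Y i \<omega>)" for \<omega>
    have distZ': "distributed M lborel Z (normal_density 0 \<sigma>)" using distZ unfolding Z_def by simp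
    have mom: "has_bochner_integral lborel (\<lambda>x. normal_density 0 \<sigma> x * x ^ (2 * k))
         (fact (2 * k) / ((2 / \<sigma>\<^sup>2) ^ k * fact k))"
      using normal_moment_even[OF \<sigma>pos, of 0 k] by simp
    have intZ: "integrable M (\<lambda>\<omega>. Z \<omega> ^ (2 * k))"
      using distributed_integrable[OF distZ', of "\<lambda>x. x ^ (2 * k)"] mom
      by (simp add: has_bochner_integral_iff normal_density_nonneg)
    have EZ: "(\<integral>\<omega>. Z \<omega> ^ (2 * k) \<partial>M) = fact (2 * k) / ((2 / \<sigma>\<^sup>2) ^ k * fact k)"
      using distributed_integral[OF distZ', of "\<lambda>x. x ^ (2 * k)"] mom
      by (simp add: has_bochner_integral_iff normal_density_nonneg)
    have measZ[measurable]: "Z \<in> borel_measurable M"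
      using distributed_measurable[OF distZ'] by simp
    have "measure M {\<omega>\<in>space M. t \<le> \<bar>\<Sum>i\<in>J. c i * X i \<omega>\<bar>} \<le> measure M {\<omega>\<in>space M. t ^ (2 * k) \<le> Z \<omega> ^ (2 * k)}"
    proof (rule finite_measure_mono)
      show "{\<omega>\<in>space M. t \<le> \<bar>\<Sum>i\<in>J. c i * X i \<omega>\<bar>} \<subseteq> {\<omega>\<in>space M. t ^ (2 * k) \<le> Z \<omega> ^ (2 * k)}"
      proof safe
        fix \<omega> assume "\<omega> \<in> space M" "t \<le> \<bar>\<Sum>i\<in>J. c i * X i \<omega>\<bar>"
        then have "t \<le> \<bar>Z \<omega>\<bar>" by (simp add: Z_def Y_def sumeq)
        then have "t ^ (2 * k) \<le> \<bar>Z \<omega>\<bar> ^ (2 * k)" using t by (intro power_mono) auto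
        then show "t ^ (2 * k) \<le> Z \<omega> ^ (2 * k)" by (simp add: power_even_abs)
      qed
      show "{\<omega>\<in>space M. t ^ (2 * k) \<le> Z \<omega> ^ (2 * k)} \<in> sets M" by measurable
    qed
    also have "\<dots> \<le> (\<integral>\<omega>. Z \<omega> ^ (2 * k) \<partial>M) / t ^ (2 * k)"
      by (rule integral_Markov_inequality_measure[OF intZ, of "space M"]) (use t in \<open>auto simp: power_even_eq\<close>)
    also have "\<dots> = (\<Sum>i\<in>J. (c i)\<^sup>2) ^ k * (fact (2 * k) / (2 ^ k * fact k)) / t ^ (2 * k)"
      unfolding EZ \<sigma>sq[symmetric] using \<sigma>pos by (simp add: power_divide field_simps)
    finally show ?thesis .
  qed
qed

abbreviation "N0 \<equiv> density lborel std_normal_density"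

lemma N0_prob: "prob_space N0"
  by (rule prob_space_normal_density) simp

lemma sets_N0: "sets N0 = sets borel" by simp

lemma gauss_prob: "prob_space (gauss_init L n m)"
  unfolding gauss_init_def by (rule prob_space_PiM) (rule N0_prob)

lemma coord_meas: "i \<in> init_index L n m \<Longrightarrow> (\<lambda>\<omega>. \<omega> i) \<in> measurable (gauss_init L n m) borel"
proof -
  assume i: "i \<in> init_index L n m"
  have "(\<lambda>\<omega>. \<omega> i) \<in> measurable (PiM (init_index L n m) (\<lambda>_. N0)) N0"
    by (rule measurable_component_singleton[OF i])
  then show ?thesis unfolding gauss_init_def measurable_cong_sets[OF refl sets_N0] .
qed

lemma coord_dist:
  assumes "i \<in> init_index L n m"
  shows "distributed (gauss_init L n m) lborel (\<lambda>\<omega>. \<omega> i) std_normal_density"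
  unfolding distributed_def
proof (intro conjI)
  have "distr (gauss_init L n m) lborel (\<lambda>\<omega>. \<omega> i) = distr (gauss_init L n m) N0 (\<lambda>\<omega>. \<omega> i)"
    by (rule distr_cong[OF refl]) (simp_all only: sets_density sets_lborel)
  also have "\<dots> = N0" unfolding gauss_init_def by (rule distr_PiM_component[OF N0_prob assms])
  finally show "distr (gauss_init L n m) lborel (\<lambda>\<omega>. \<omega> i) = N0" .
  show "(\<lambda>x. ennreal (std_normal_density x)) \<in> borel_measurable lborel" by simp
  show "(\<lambda>\<omega>. \<omega> i) \<in> measurable (gauss_init L n m) lborel"
    using coord_meas[OF assms] unfolding measurable_cong_sets[OF refl sets_lborel] .
qed

lemma coord_indep:
  assumes "init_index L n m \<noteq> {}"
  shows "prob_space.indep_vars (gauss_init L n m) (\<lambda>_. borel) (\<lambda>i \<omega>. \<omega> i) (init_index L n m)"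
proof -
  interpret prob_space "gauss_init L n m" by (rule gauss_prob)
  let ?I = "init_index L n m"
  have "distr (gauss_init L n m) (\<Pi>\<^sub>M i\<in>?I. borel) (\<lambda>x. \<lambda>i\<in>?I. x i) = distr (gauss_init L n m) (gauss_init L n m) (\<lambda>x. x)"
  proof (rule distr_cong[OF refl])
    show "sets (\<Pi>\<^sub>M i\<in>?I. borel) = sets (gauss_init L n m)"
      unfolding gauss_init_def by (rule sets_PiM_cong) (simp_all only: sets_density sets_lborel)
    show "\<And>x. x \<in> space (gauss_init L n m) \<Longrightarrow> restrict x ?I = x"
      unfolding gauss_init_def space_PiM by (rule restrict_PiE_iff[THEN iffD2] | simp add: PiE_def extensional_restrict)+
  qed
  also have "\<dots> = gauss_init L n m" by simp
  also have "\<dots> = (\<Pi>\<^sub>M i\<in>?I. distr (gauss_init L n m) borel (\<lambda>\<omega>. \<omega> i))"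
    unfolding gauss_init_def
  proof (rule PiM_cong[OF refl])
    fix i assume i: "i \<in> ?I"
    have "distr (PiM ?I (\<lambda>_. N0)) borel (\<lambda>\<omega>. \<omega> i) = distr (PiM ?I (\<lambda>_. N0)) N0 (\<lambda>\<omega>. \<omega> i)"
      by (rule distr_cong[OF refl]) (simp_all only: sets_density sets_lborel)
    also have "\<dots> = N0" by (rule distr_PiM_component[OF N0_prob i])
    finally show "N0 = distr (PiM ?I (\<lambda>_. N0)) borel (\<lambda>\<omega>. \<omega> i)" by simp
  qed
  finally have eq: "distr (gauss_init L n m) (\<Pi>\<^sub>M i\<in>?I. borel) (\<lambda>x. \<lambda>i\<in>?I. x i) = (\<Pi>\<^sub>M i\<in>?I. distr (gauss_init L n m) borel (\<lambda>\<omega>. \<omega> i))" .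
  have rv: "\<And>i. i \<in> ?I \<Longrightarrow> random_variable borel (\<lambda>\<omega>. \<omega> i)" by (rule coord_meas)
  show ?thesis
    by (rule iffD2[OF indep_vars_iff_distr_eq_PiM'[where I="?I" and M'="\<lambda>_. borel" and X="\<lambda>i \<omega>. \<omega> i", OF assms rv] eq])
qed

lemma dfact_bound: "fact (2 * k) / (2 ^ k * fact k) \<le> (2 * real k) ^ k"
proof (induction k)
  case 0
  then show ?case by simp
next
  case (Suc k)
  have e: "fact (2 * Suc k) / (2 ^ Suc k * fact (Suc k)) = (2 * real k + 1) * (fact (2 * k) / (2 ^ k * fact k))"
  proof -
    have n1: "fact (2 * Suc k) = (2 * real k + 2) * ((2 * real k + 1) * (fact (2 * k) :: real))"
      by (simp add: fact_Suc algebra_simps)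
    have n2: "(2 ^ Suc k * fact (Suc k) :: real) = (2 * real k + 2) * (2 ^ k * fact k)"
      by (simp add: fact_Suc algebra_simps)
    have "fact (2 * Suc k) / (2 ^ Suc k * fact (Suc k) :: real) =
        ((2 * real k + 2) * ((2 * real k + 1) * fact (2 * k))) / ((2 * real k + 2) * (2 ^ k * fact k))"
      unfolding n1 n2 by (rule refl)
    also have "\<dots> = ((2 * real k + 1) * fact (2 * k)) / (2 ^ k * fact k)"
      by (rule nonzero_mult_divide_mult_cancel_left) simp
    finally show ?thesis by simp
  qed
  have "(2 * real k + 1) * (fact (2 * k) / (2 ^ k * fact k)) \<le> (2 * real k + 2) * (2 * real k + 2) ^ k"
  proof (rule mult_mono)
    show "fact (2 * k) / (2 ^ k * fact k) \<le> (2 * real k + 2) ^ k"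
      using Suc.IH by (rule order_trans) (intro power_mono; simp)
  qed (auto simp: zero_le_divide_iff)
  then show ?case unfolding e by (simp add: algebra_simps)
qed


lemma ip_Mv_W20: "ip m q (Mv m (W20_of \<omega> l) p) =
   (\<Sum>\<iota>\<in>(\<lambda>(i, j). (2::nat, l, i, j)) ` ({..<m} \<times> {..<m}). (case \<iota> of (_, _, i, j) \<Rightarrow> q i * p j) * \<omega> \<iota>)"
proof -
  have inj: "inj_on (\<lambda>(i, j). (2::nat, l, i, j)) ({..<m} \<times> {..<m})" by (auto simp: inj_on_def)
  have "ip m q (Mv m (W20_of \<omega> l) p) = (\<Sum>i<m. \<Sum>j<m. q i * p j * \<omega> (2, l, i, j))"
    unfolding ip_def Mv_def W20_of_def by (simp add: sum_distrib_left algebra_simps)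
  also have "\<dots> = (\<Sum>(i, j)\<in>{..<m} \<times> {..<m}. q i * p j * \<omega> (2, l, i, j))"
    by (rule sum.cartesian_product)
  also have "\<dots> = (\<Sum>\<iota>\<in>(\<lambda>(i, j). (2::nat, l, i, j)) ` ({..<m} \<times> {..<m}). (case \<iota> of (_, _, i, j) \<Rightarrow> q i * p j) * \<omega> \<iota>)"
    by (subst sum.reindex[OF inj]) (auto intro!: sum.cong)
  finally show ?thesis .
qed

lemma pair_tail:
  assumes m: "0 < m" and l: "l \<in> {1..L}" and p: "p \<in> net m" and q: "q \<in> net m" and tt: "0 < tt"
  shows "measure (gauss_init L n m) {\<omega>\<in>space (gauss_init L n m). tt \<le> \<bar>ip m q (Mv m (W20_of \<omega> l) p)\<bar>}
     \<le> (32 * real k) ^ k / tt ^ (2 * k)"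
proof -
  interpret P: prob_space "gauss_init L n m" by (rule gauss_prob)
  define J where "J = (\<lambda>(i, j). (2::nat, l, i, j)) ` ({..<m} \<times> {..<m})"
  define c where "c \<iota> = (case \<iota> of (_, _, i, j) \<Rightarrow> q i * p j)" for \<iota> :: "nat \<times> nat \<times> nat \<times> nat"
  have JI: "J \<subseteq> init_index L n m" using l unfolding J_def init_index_def by auto
  have Jne: "J \<noteq> {}" using m unfolding J_def by auto
  have finJ: "finite J" unfolding J_def by simp
  have ind: "P.indep_vars (\<lambda>_. borel) (\<lambda>i \<omega>. \<omega> i) J"
    using P.indep_vars_subset[OF coord_indep JI] Jne JI by blast
  have dist: "\<And>i. i \<in> J \<Longrightarrow> distributed (gauss_init L n m) lborel (\<lambda>\<omega>. \<omega> i) std_normal_density"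
    using JI coord_dist by blast
  have eq: "ip m q (Mv m (W20_of \<omega> l) p) = (\<Sum>\<iota>\<in>J. c \<iota> * \<omega> \<iota>)" for \<omega>
    unfolding ip_Mv_W20 J_def c_def ..
  have sc: "(\<Sum>\<iota>\<in>J. (c \<iota>)\<^sup>2) \<le> 16"
  proof -
    have inj: "inj_on (\<lambda>(i, j). (2::nat, l, i, j)) ({..<m} \<times> {..<m})" by (auto simp: inj_on_def)
    have "(\<Sum>\<iota>\<in>J. (c \<iota>)\<^sup>2) = (\<Sum>(i, j)\<in>{..<m} \<times> {..<m}. (q i)\<^sup>2 * (p j)\<^sup>2)"
      unfolding J_def c_def by (subst sum.reindex[OF inj]) (auto intro!: sum.cong simp: power_mult_distrib)
    also have "\<dots> = (\<Sum>i<m. \<Sum>j<m. (q i)\<^sup>2 * (p j)\<^sup>2)"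
      by (rule sum.cartesian_product[symmetric])
    also have "\<dots> = (vnorm m q)\<^sup>2 * (vnorm m p)\<^sup>2"
      unfolding vnorm_sq sum_product by (rule refl)
    also have "\<dots> \<le> 2\<^sup>2 * 2\<^sup>2"
      using net_vnorm[OF p] net_vnorm[OF q] vnorm_nonneg[of m p] vnorm_nonneg[of m q]
      by (intro mult_mono power_mono) auto
    finally show ?thesis by simp
  qed
  have "measure (gauss_init L n m) {\<omega>\<in>space (gauss_init L n m). tt \<le> \<bar>ip m q (Mv m (W20_of \<omega> l) p)\<bar>}
      = measure (gauss_init L n m) {\<omega>\<in>space (gauss_init L n m). tt \<le> \<bar>\<Sum>\<iota>\<in>J. c \<iota> * \<omega> \<iota>\<bar>}"
    unfolding eq ..
  also have "\<dots> \<le> (\<Sum>\<iota>\<in>J. (c \<iota>)\<^sup>2) ^ k * (fact (2 * k) / (2 ^ k * fact k)) / tt ^ (2 * k)"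
    by (rule P.gauss_tail[OF finJ ind dist tt])
  also have "\<dots> \<le> 16 ^ k * (2 * real k) ^ k / tt ^ (2 * k)"
  proof (rule divide_right_mono)
    have a: "(\<Sum>\<iota>\<in>J. (c \<iota>)\<^sup>2) ^ k \<le> 16 ^ k" by (rule power_mono[OF sc]) (simp add: sum_nonneg)
    have f0: "0 \<le> fact (2 * k) / (2 ^ k * fact k :: real)" by (simp add: zero_le_divide_iff)
    show "(\<Sum>\<iota>\<in>J. (c \<iota>)\<^sup>2) ^ k * (fact (2 * k) / (2 ^ k * fact k)) \<le> 16 ^ k * (2 * real k) ^ k"
      by (rule mult_mono[OF a dfact_bound[of k] _ f0]) simp
    show "0 \<le> tt ^ (2 * k)" using tt by simp
  qed
  also have "16 ^ k * (2 * real k) ^ k = (16 * (2 * real k)) ^ k"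
    by (rule power_mult_distrib[symmetric])
  also have "16 * (2 * real k) = 32 * real k" by simp
  finally show ?thesis .
qed


definition rpar :: "nat \<Rightarrow> nat" where
  "rpar m = nat \<lceil>ln (2 * (8 * real m + 1)\<^sup>2)\<rceil>"

definition kpar :: "nat \<Rightarrow> nat" where "kpar m = m * rpar m"

definition ttpar :: "nat \<Rightarrow> real" where "ttpar m = sqrt (128 * real (kpar m))"

definition goodset :: "nat \<Rightarrow> nat \<Rightarrow> nat \<Rightarrow> (nat \<times> nat \<times> nat \<times> nat \<Rightarrow> real) set" where
  "goodset L n m = {\<omega>\<in>space (gauss_init L n m). \<forall>l\<in>{1..L}. \<forall>p\<in>net m. \<forall>q\<in>net m.
      \<bar>ip m q (Mv m (W20_of \<omega> l) p)\<bar> < ttpar m}"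

lemma rpar_pow: "2 * (8 * real m + 1)\<^sup>2 \<le> 4 ^ rpar m"
proof -
  define X where "X = 2 * (8 * real m + 1)\<^sup>2"
  have "1 \<le> (8 * real m + 1)\<^sup>2" by (rule one_le_power) simp
  then have X1: "1 \<le> X" unfolding X_def by linarith
  have "X = exp (ln X)" using X1 by simp
  also have "\<dots> \<le> exp (real (rpar m))"
    unfolding rpar_def X_def[symmetric] by simp linarith
  also have "\<dots> = exp 1 ^ rpar m" by (simp add: exp_of_nat_mult[symmetric])
  also have "\<dots> \<le> 4 ^ rpar m" using exp_le by (intro power_mono) auto
  finally show ?thesis unfolding X_def .
qed

lemma rpar_ge1: "1 \<le> rpar m"
proof -
  have "1 \<le> (8 * real m + 1)\<^sup>2" by (rule one_le_power) simp
  then have "1 < 2 * (8 * real m + 1)\<^sup>2" by linarith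
  then have "0 < ln (2 * (8 * real m + 1)\<^sup>2)" by simp
  then show ?thesis unfolding rpar_def by linarith
qed

lemma rpar_le: assumes "1 \<le> m" shows "real (rpar m) \<le> 18 * (1 + ln (real m))"
proof -
  have m1: "1 \<le> real m" using assms by simp
  have "1 \<le> (8 * real m + 1)\<^sup>2" by (rule one_le_power) simp
  then have "1 \<le> 2 * (8 * real m + 1)\<^sup>2" by linarith
  then have "0 \<le> ln (2 * (8 * real m + 1)\<^sup>2)" by (rule ln_ge_zero)
  then have "real (rpar m) = real_of_int \<lceil>ln (2 * (8 * real m + 1)\<^sup>2)\<rceil>"
    unfolding rpar_def by simp
  also have "\<dots> \<le> ln (2 * (8 * real m + 1)\<^sup>2) + 1" by linarith
  finally have "real (rpar m) \<le> ln (2 * (8 * real m + 1)\<^sup>2) + 1" .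
  also have "ln (2 * (8 * real m + 1)\<^sup>2) = ln 2 + 2 * ln (8 * real m + 1)"
    by (simp add: ln_mult ln_realpow)
  also have "ln (8 * real m + 1) \<le> ln (9 * real m)" using m1 by simp
  also have "ln (9 * real m) = ln 9 + ln (real m)" using m1 by (simp add: ln_mult)
  also have "ln (2::real) \<le> 1" using ln_le_minus_one[of 2] by simp
  also have "ln (9::real) \<le> 8" using ln_le_minus_one[of 9] by simp
  finally have "real (rpar m) \<le> 18 + 2 * ln (real m)" by simp
  moreover have "0 \<le> ln (real m)" using m1 by simp
  ultimately show ?thesis by (simp add: distrib_left)
qed

lemma ip_Mv_meas:
  assumes "l \<in> {1..L}"
  shows "(\<lambda>\<omega>. ip m q (Mv m (W20_of \<omega> l) p)) \<in> borel_measurable (gauss_init L n m)"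
proof -
  have JI: "(\<lambda>(i, j). (2::nat, l, i, j)) ` ({..<m} \<times> {..<m}) \<subseteq> init_index L n m"
    using assms unfolding init_index_def by auto
  show ?thesis unfolding ip_Mv_W20
  proof (rule borel_measurable_sum)
    fix \<iota> assume "\<iota> \<in> (\<lambda>(i, j). (2::nat, l, i, j)) ` ({..<m} \<times> {..<m})"
    then have "\<iota> \<in> init_index L n m" by (rule subsetD[OF JI])
    then have "(\<lambda>\<omega>. \<omega> \<iota>) \<in> borel_measurable (gauss_init L n m)" by (rule coord_meas)
    then show "(\<lambda>\<omega>. (case \<iota> of (_, _, i, j) \<Rightarrow> q i * p j) * \<omega> \<iota>) \<in> borel_measurable (gauss_init L n m)"
      by (rule borel_measurable_times[OF borel_measurable_const])
  qed
qed

lemma goodset_prob: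
  assumes m: "1 \<le> m"
  shows "goodset L n m \<in> sets (gauss_init L n m) \<and> 1 - real L / 2 ^ m \<le> measure (gauss_init L n m) (goodset L n m)"
proof -
  interpret P: prob_space "gauss_init L n m" by (rule gauss_prob)
  let ?M = "gauss_init L n m"
  define tt where "tt = ttpar m"
  define k where "k = kpar m"
  define T where "T = {1..L} \<times> net m \<times> net m"
  define B where "B x = {\<omega>\<in>space ?M. tt \<le> \<bar>ip m (snd (snd x)) (Mv m (W20_of \<omega> (fst x)) (fst (snd x)))\<bar>}" for x :: "nat \<times> (nat \<Rightarrow> real) \<times> (nat \<Rightarrow> real)"
  have k1: "1 \<le> k" unfolding k_def kpar_def using m rpar_ge1[of m] by (simp add: one_le_mult_iff)
  have tt0: "0 < tt" unfolding tt_def ttpar_def using k1 k_def by simp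
  have finT: "finite T" unfolding T_def using net_card[of m] by simp
  have Bs: "B x \<in> sets ?M" if "x \<in> T" for x
  proof -
    have l: "fst x \<in> {1..L}" using that unfolding T_def by auto
    have [measurable]: "(\<lambda>\<omega>. ip m (snd (snd x)) (Mv m (W20_of \<omega> (fst x)) (fst (snd x)))) \<in> borel_measurable ?M"
      by (rule ip_Mv_meas[OF l])
    show ?thesis unfolding B_def by measurable
  qed
  have all: "(\<forall>l\<in>{1..L}. \<forall>p\<in>net m. \<forall>q\<in>net m. R l p q) \<longleftrightarrow> (\<forall>x\<in>T. R (fst x) (fst (snd x)) (snd (snd x)))" for R
    unfolding T_def by auto
  have G: "goodset L n m = space ?M - (\<Union>x\<in>T. B x)"
  proof -
    have "goodset L n m = {\<omega>\<in>space ?M. \<forall>x\<in>T. \<not> (tt \<le> \<bar>ip m (snd (snd x)) (Mv m (W20_of \<omega> (fst x)) (fst (snd x)))\<bar>)}"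
      unfolding goodset_def tt_def not_le by (intro Collect_cong conj_cong[OF refl] all)
    also have "\<dots> = space ?M - (\<Union>x\<in>T. B x)" unfolding B_def by blast
    finally show ?thesis .
  qed
  have U: "(\<Union>x\<in>T. B x) \<in> sets ?M" by (rule sets.finite_UN[OF finT Bs])
  have Gs: "goodset L n m \<in> sets ?M" unfolding G by (rule sets.compl_sets[OF U])
  have each: "measure ?M (B x) \<le> 1 / 4 ^ k" if "x \<in> T" for x
  proof -
    obtain l p q where xe: "x = (l, p, q)" by (metis prod_cases3)
    then have x: "x = (l, p, q)" "l \<in> {1..L}" "p \<in> net m" "q \<in> net m"
      using that unfolding T_def by auto
    have "measure ?M (B x) \<le> (32 * real k) ^ k / tt ^ (2 * k)"
      unfolding x(1) B_def fst_conv snd_conv using pair_tail[OF _ x(2) x(3) x(4) tt0, where k=k] m by simp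
    also have "tt ^ (2 * k) = (128 * real k) ^ k"
      unfolding tt_def ttpar_def k_def[symmetric] by (simp add: power_mult)
    also have "(32 * real k) ^ k / (128 * real k) ^ k = 1 / 4 ^ k"
      using k1 by (simp add: power_divide[symmetric] power_one_over)
    finally show ?thesis .
  qed
  have "measure ?M (\<Union>x\<in>T. B x) \<le> (\<Sum>x\<in>T. measure ?M (B x))"
    by (rule measure_UNION_le[OF finT Bs])
  also have "\<dots> \<le> (\<Sum>x\<in>T. 1 / 4 ^ k)" by (rule sum_mono[OF each])
  also have "\<dots> = real (card T) / 4 ^ k" by simp
  also have "\<dots> \<le> real L / 2 ^ m"
  proof -
    have cT: "card T = L * card (net m) * card (net m)" unfolding T_def by (simp add: card_cartesian_product)
    have "real (card T) \<le> real L * (8 * real m + 1) ^ m * (8 * real m + 1) ^ m"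
    proof -
      have "real (card (net m)) \<le> (8 * real m + 1) ^ m"
        using net_card[of m] by (metis of_nat_le_iff of_nat_power of_nat_Suc of_nat_mult of_nat_numeral Suc_eq_plus1 add.commute)
      then show ?thesis unfolding cT by (simp add: mult_mono mult.assoc)
    qed
    moreover have "2 ^ m * ((8 * real m + 1) ^ m * (8 * real m + 1) ^ m) \<le> 4 ^ k"
    proof -
      have "2 ^ m * ((8 * real m + 1) ^ m * (8 * real m + 1) ^ m) = (2 * (8 * real m + 1)\<^sup>2) ^ m"
        by (simp add: power_mult_distrib power2_eq_square)
      also have "\<dots> \<le> (4 ^ rpar m) ^ m" by (intro power_mono rpar_pow) (simp add: power2_eq_square)
      also have "\<dots> = 4 ^ k" unfolding k_def kpar_def by (simp add: power_mult[symmetric] mult.commute)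
      finally show ?thesis .
    qed
    ultimately show ?thesis
    proof -
      define Y where "Y = (8 * real m + 1) ^ m * (8 * real m + 1) ^ m"
      assume a1: "real (card T) \<le> real L * (8 * real m + 1) ^ m * (8 * real m + 1) ^ m"
         and a2: "2 ^ m * ((8 * real m + 1) ^ m * (8 * real m + 1) ^ m) \<le> 4 ^ k"
      have b1: "real (card T) \<le> real L * Y" using a1 unfolding Y_def by (simp add: mult.assoc)
      have b2: "2 ^ m * Y \<le> 4 ^ k" using a2 unfolding Y_def .
      have "real (card T) * 2 ^ m \<le> real L * Y * 2 ^ m" using b1 by (intro mult_right_mono) auto
      also have "\<dots> = real L * (2 ^ m * Y)" by (simp add: algebra_simps)
      also have "\<dots> \<le> real L * 4 ^ k" using b2 by (intro mult_left_mono) auto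
      finally have "real (card T) * 2 ^ m \<le> real L * 4 ^ k" .
      then show ?thesis by (simp add: field_simps)
    qed
  qed
  finally have "measure ?M (\<Union>x\<in>T. B x) \<le> real L / 2 ^ m" .
  moreover have "measure ?M (goodset L n m) = 1 - measure ?M (\<Union>x\<in>T. B x)"
    unfolding G by (rule P.prob_compl[OF U])
  ultimately have "1 - real L / 2 ^ m \<le> measure ?M (goodset L n m)" by linarith
  with Gs show ?thesis by blast
qed


lemma opb_mono: "opb m W \<beta> \<Longrightarrow> \<beta> \<le> \<beta>' \<Longrightarrow> opb m W \<beta>'"
  unfolding opb_def by (meson mult_right_mono order_trans vnorm_nonneg)

lemma wdist_layer:
  assumes "wdist L m m W V \<le> R" "l \<in> {1..L}"
  shows "(\<Sum>i<m. \<Sum>j<m. (W l i j - V l i j)\<^sup>2) \<le> R\<^sup>2"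
proof -
  define S where "S = (\<Sum>l\<in>{1..L}. \<Sum>i<m. \<Sum>j<m. (W l i j - V l i j)\<^sup>2)"
  have S0: "0 \<le> S" unfolding S_def by (intro sum_nonneg) auto
  have "(\<Sum>i<m. \<Sum>j<m. (W l i j - V l i j)\<^sup>2) \<le> S"
    unfolding S_def by (rule member_le_sum[OF assms(2)]) (auto intro!: sum_nonneg)
  also have "S = (wdist L m m W V)\<^sup>2" unfolding wdist_def S_def[symmetric] using S0 by simp
  also have "\<dots> \<le> R\<^sup>2"
  proof (rule power_mono[OF assms(1)])
    show "0 \<le> wdist L m m W V" unfolding wdist_def S_def[symmetric] using S0 by simp
  qed
  finally show ?thesis .
qed

lemma beta_bound:
  assumes m: "1 \<le> m"
  shows "5 * (1 + (4 * ttpar m + \<bar>R\<bar>) / sqrt (real m)) \<le> 5 * (865 + \<bar>R\<bar>) * (1 + ln (real m))"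
proof -
  define r where "r = real (rpar m)"
  have r1: "1 \<le> r" unfolding r_def using rpar_ge1[of m] by simp
  have sm: "1 \<le> sqrt (real m)" using m by simp
  have lm: "0 \<le> ln (real m)" using m by simp
  have "ttpar m = sqrt (real m) * sqrt (128 * r)"
    unfolding ttpar_def kpar_def r_def by (simp add: real_sqrt_mult[symmetric] algebra_simps)
  then have t: "4 * ttpar m / sqrt (real m) = 4 * sqrt (128 * r)" using sm by simp
  have "sqrt (128 * r) \<le> sqrt ((12 * r)\<^sup>2)" using r1 by (intro real_sqrt_le_mono) (simp add: power2_eq_square)
  also have "\<dots> = 12 * r" by (subst real_sqrt_abs) (use r1 in simp)
  finally have "4 * ttpar m / sqrt (real m) \<le> 48 * r" unfolding t by simp
  also have "\<dots> \<le> 48 * (18 * (1 + ln (real m)))" unfolding r_def using rpar_le[OF m] by simp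
  finally have a: "4 * ttpar m / sqrt (real m) \<le> 864 * (1 + ln (real m))" by simp
  have b: "\<bar>R\<bar> / sqrt (real m) \<le> \<bar>R\<bar> * (1 + ln (real m))"
  proof -
    have "\<bar>R\<bar> / sqrt (real m) \<le> \<bar>R\<bar>" using sm by (simp add: divide_le_eq mult_le_cancel_left1 order_trans[OF _ mult_right_mono[of 1 "sqrt (real m)" "\<bar>R\<bar>"]])
    also have "\<dots> \<le> \<bar>R\<bar> * (1 + ln (real m))" using lm by (simp add: mult_le_cancel_left1)
    finally show ?thesis .
  qed
  have "(4 * ttpar m + \<bar>R\<bar>) / sqrt (real m) = 4 * ttpar m / sqrt (real m) + \<bar>R\<bar> / sqrt (real m)"
    by (simp add: add_divide_distrib)
  then have "1 + (4 * ttpar m + \<bar>R\<bar>) / sqrt (real m) \<le> (865 + \<bar>R\<bar>) * (1 + ln (real m))"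
    using a b lm by (simp add: algebra_simps)
  then have "5 * (1 + (4 * ttpar m + \<bar>R\<bar>) / sqrt (real m)) \<le> 5 * ((865 + \<bar>R\<bar>) * (1 + ln (real m)))"
    by (rule mult_left_mono) simp
  then show ?thesis by (simp only: mult.assoc)
qed

theorem lemma12:
  fixes lam Cy Cz Cu R1 R2 :: real and L n :: nat
  assumes "lam > 0"
  shows "\<exists>C (k::nat) (\<delta>::nat \<Rightarrow> real). (\<delta> \<longlonglongrightarrow> 0) \<and>
    (\<forall>\<^sub>F m in sequentially.
      \<forall>y z0 u0. (\<forall>i<n. \<bar>y i\<bar> \<le> Cy) \<and> (\<forall>i<m. \<bar>z0 i\<bar> \<le> Cz) \<and> (\<forall>i<m. \<bar>u0 i\<bar> \<le> Cu) \<longrightarrow>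
        (\<exists>A \<in> sets (gauss_init L n m).
           measure (gauss_init L n m) A \<ge> 1 - \<delta> m \<and>
           (\<forall>\<omega>\<in>A. \<forall>W1 W2.
              wdist L m n W1 (W10_of \<omega>) \<le> R1 \<and> wdist L m m W2 (W20_of \<omega>) \<le> R2 \<longrightarrow>
              (\<forall>s<m. \<forall>l\<in>{1..L-1}.
                 vnorm m (\<lambda>j. admm_b lam n m L W1 W2 y z0 u0 s l j
                              - admm_b lam n m L (W10_of \<omega>) (W20_of \<omega>) y z0 u0 s l j)
                   \<le> C * (1 + ln (real m)) ^ k / sqrt (real m)))))"
  proof -
  define K where "K = 5 * (865 + \<bar>R2\<bar>)"
  have K1: "1 \<le> K" unfolding K_def by simp
  show ?thesis
  proof (intro exI conjI)
    show "(\<lambda>m. real L / 2 ^ m) \<longlonglongrightarrow> 0"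
      using tendsto_mult[OF tendsto_const LIMSEQ_inverse_realpow_zero[of 2], of "real L"]
      by (simp add: divide_inverse)
    show "\<forall>\<^sub>F m in sequentially.
      \<forall>y z0 u0. (\<forall>i<n. \<bar>y i\<bar> \<le> Cy) \<and> (\<forall>i<m. \<bar>z0 i\<bar> \<le> Cz) \<and> (\<forall>i<m. \<bar>u0 i\<bar> \<le> Cu) \<longrightarrow>
        (\<exists>A \<in> sets (gauss_init L n m).
           measure (gauss_init L n m) A \<ge> 1 - real L / 2 ^ m \<and>
           (\<forall>\<omega>\<in>A. \<forall>W1 W2.
              wdist L m n W1 (W10_of \<omega>) \<le> R1 \<and> wdist L m m W2 (W20_of \<omega>) \<le> R2 \<longrightarrow>
              (\<forall>s<m. \<forall>l\<in>{1..L-1}.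
                 vnorm m (\<lambda>j. admm_b lam n m L W1 W2 y z0 u0 s l j
                              - admm_b lam n m L (W10_of \<omega>) (W20_of \<omega>) y z0 u0 s l j)
                   \<le> (2 * K ^ L) * (1 + ln (real m)) ^ L / sqrt (real m))))"
    proof (rule eventually_sequentiallyI[of 1], intro allI impI)
      fix m :: nat and y z0 u0 :: "nat \<Rightarrow> real"
      assume m: "1 \<le> m"
      have m0: "0 < m" using m by simp
      have GP: "goodset L n m \<in> sets (gauss_init L n m) \<and> 1 - real L / 2 ^ m \<le> measure (gauss_init L n m) (goodset L n m)"
        by (rule goodset_prob[OF m])
      define \<beta> where "\<beta> = 4 * ttpar m + \<bar>R2\<bar>"
      have tt0: "0 \<le> ttpar m" unfolding ttpar_def by simp
      have \<beta>0: "0 \<le> \<beta>" unfolding \<beta>_def using tt0 by simp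
      define X where "X = 5 * (1 + \<beta> / sqrt (real m))"
      have X1: "1 \<le> X" unfolding X_def using \<beta>0 by simp
      have XK: "X \<le> K * (1 + ln (real m))" unfolding X_def \<beta>_def K_def by (rule beta_bound[OF m])
      have lm: "0 \<le> ln (real m)" using m by simp
      show "\<exists>A \<in> sets (gauss_init L n m).
           measure (gauss_init L n m) A \<ge> 1 - real L / 2 ^ m \<and>
           (\<forall>\<omega>\<in>A. \<forall>W1 W2.
              wdist L m n W1 (W10_of \<omega>) \<le> R1 \<and> wdist L m m W2 (W20_of \<omega>) \<le> R2 \<longrightarrow>
              (\<forall>s<m. \<forall>l\<in>{1..L-1}.
                 vnorm m (\<lambda>j. admm_b lam n m L W1 W2 y z0 u0 s l j
                              - admm_b lam n m L (W10_of \<omega>) (W20_of \<omega>) y z0 u0 s l j)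
                   \<le> (2 * K ^ L) * (1 + ln (real m)) ^ L / sqrt (real m)))"
      proof (rule bexI[of _ "goodset L n m"], intro conjI ballI allI impI)
        show "goodset L n m \<in> sets (gauss_init L n m)" using GP by blast
        show "1 - real L / 2 ^ m \<le> measure (gauss_init L n m) (goodset L n m)" using GP by blast
        fix \<omega> W1 W2 s l
        assume \<omega>: "\<omega> \<in> goodset L n m"
          and dW: "wdist L m n W1 (W10_of \<omega>) \<le> R1 \<and> wdist L m m W2 (W20_of \<omega>) \<le> R2"
          and s: "s < m" and l: "l \<in> {1..L-1}"
        have op0: "opb m (W20_of \<omega> l') \<beta>" if "l' \<in> {1..L}" for l'
        proof -
          have "\<forall>p\<in>net m. \<forall>q\<in>net m. \<bar>ip m q (Mv m (W20_of \<omega> l') p)\<bar> \<le> ttpar m"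
            using \<omega> that unfolding goodset_def by (auto intro: less_imp_le)
          then have "opb m (W20_of \<omega> l') (4 * ttpar m)" by (rule net_opb[OF m0 tt0])
          then show ?thesis by (rule opb_mono) (simp add: \<beta>_def)
        qed
        have R2: "0 \<le> R2" using dW unfolding wdist_def by (meson order_trans real_sqrt_ge_zero sum_nonneg zero_le_power2)
        have op1: "opb m (W2 l') \<beta>" if "l' \<in> {1..L}" for l'
        proof -
          have "opb m (W20_of \<omega> l') (4 * ttpar m)"
          proof -
            have "\<forall>p\<in>net m. \<forall>q\<in>net m. \<bar>ip m q (Mv m (W20_of \<omega> l') p)\<bar> \<le> ttpar m"
              using \<omega> that unfolding goodset_def by (auto intro: less_imp_le)
            then show ?thesis by (rule net_opb[OF m0 tt0])
          qed
          moreover have "(\<Sum>i<m. \<Sum>j<m. (W2 l' i j - W20_of \<omega> l' i j)\<^sup>2) \<le> R2\<^sup>2"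
            using dW that by (intro wdist_layer) auto
          ultimately have "opb m (W2 l') (4 * ttpar m + R2)" by (rule opb_perturb[OF _ _ R2])
          then show ?thesis by (rule opb_mono) (simp add: \<beta>_def)
        qed
        have l1: "1 \<le> l" using l by simp
        have b1: "vnorm m (\<lambda>j. admm_b lam n m L W1 W2 y z0 u0 s l j) \<le> X ^ (L - l) / sqrt (real m)"
          unfolding X_def by (rule b_norm[OF _ \<beta>0 m0 s]) (use op1 l1 in auto)
        have b2: "vnorm m (\<lambda>j. admm_b lam n m L (W10_of \<omega>) (W20_of \<omega>) y z0 u0 s l j) \<le> X ^ (L - l) / sqrt (real m)"
          unfolding X_def by (rule b_norm[OF _ \<beta>0 m0 s]) (use op0 l1 in auto)
        have XL: "X ^ (L - l) \<le> K ^ L * (1 + ln (real m)) ^ L"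
        proof -
          have "X ^ (L - l) \<le> X ^ L" using X1 by (intro power_increasing) auto
          also have "\<dots> \<le> (K * (1 + ln (real m))) ^ L" using XK X1 by (intro power_mono) auto
          finally show ?thesis by (simp add: power_mult_distrib)
        qed
        have "vnorm m (\<lambda>j. admm_b lam n m L W1 W2 y z0 u0 s l j - admm_b lam n m L (W10_of \<omega>) (W20_of \<omega>) y z0 u0 s l j)
           \<le> X ^ (L - l) / sqrt (real m) + X ^ (L - l) / sqrt (real m)"
          using vnorm_diff b1 b2 by (meson add_mono order_trans)
        also have "\<dots> = 2 * X ^ (L - l) / sqrt (real m)" by simp
        also have "\<dots> \<le> 2 * (K ^ L * (1 + ln (real m)) ^ L) / sqrt (real m)"
          using XL by (intro divide_right_mono) auto
        finally show "vnorm m (\<lambda>j. admm_b lam n m L W1 W2 y z0 u0 s l j - admm_b lam n m L (W10_of \<omega>) (W20_of \<omega>) y z0 u0 s l j)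
           \<le> (2 * K ^ L) * (1 + ln (real m)) ^ L / sqrt (real m)" by (simp add: mult.assoc)
      qed
    qed
  qed
qed

end
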